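(* $\{x^2 y : x,y \in \widetilde C\} = [\tfrac{8}{27},1]$.
   Context: $C=\{\sum_{k\ge1}\alpha_k3^{-k}:\alpha_k\in\{0,2\}\}$ is the middle-thirds Cantor set, and $\widetilde C = C\cap[\tfrac23,1] = \tfrac23+\tfrac13C$. *)

theory Defs
  imports "HOL-Analysis.Analysis"
begin

text \<open>Middle-thirds Cantor set: sums of alpha_k 3^(-k), k >= 1, alpha_k in {0,2}.
  Index shifted: alpha n corresponds to digit k = n+1.\<close>
definition cantor_set :: "real set" where
  "cantor_set = {(\<Sum>n. real (\<alpha> n) / 3 ^ (Suc n)) | \<alpha> :: nat \<Rightarrow> nat. \<forall>n. \<alpha> n \<in> {0, 2}}"

definition cantor_tilde :: "real set" where
  "cantor_tilde = cantor_set \<inter> {2/3..1}"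

end

theory Submission
  imports Defs
begin

definition dd :: "nat \<Rightarrow> real" where "dd m = (1/3)^(Suc m)"

fun st :: "real \<Rightarrow> nat \<Rightarrow> real \<times> real" where
  "st t 0 = (2/3, 2/3)"
| "st t (Suc m) = (let a = fst (st t m); b = snd (st t m); e = dd m / 3;
     a' = (if t \<le> (a+e)^2*(b+dd m) then a else a + 2*e);
     b' = (if t \<le> (a'+e)^2*(b+e) then b else b + 2*e) in (a', b'))"

definition alp :: "real \<Rightarrow> nat \<Rightarrow> nat" where
  "alp t j = (case j of 0 \<Rightarrow> 2 | Suc m \<Rightarrow>
     if t \<le> (fst (st t m) + dd m/3)^2*(snd (st t m) + dd m) then 0 else 2)"

definition bet :: "real \<Rightarrow> nat \<Rightarrow> nat" where
  "bet t j = (case j of 0 \<Rightarrow> 2 | Suc m \<Rightarrow>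
     if t \<le> (fst (st t (Suc m)) + dd m/3)^2*(snd (st t m) + dd m/3) then 0 else 2)"

lemma split1:
  fixes a b e :: real
  assumes "a \<ge> 2/3" "b \<le> 1" "e \<ge> 0" "b \<ge> 0"
  shows "(a+2*e)^2*b \<le> (a+e)^2*(b+3*e)"
proof -
  have "b*(e*(2*a+3*e)) \<le> 3*e*(a+e)^2"
  proof -
    have "b*(2*a+3*e) \<le> 3*(a+e)^2"
    proof -
      have "b*(2*a+3*e) \<le> 1*(2*a+3*e)" using assms by (intro mult_right_mono) auto
      also have "\<dots> \<le> 3*(a+e)^2"
      proof -
        have h1: "2*a \<le> 3*(a*a)" using assms mult_right_mono[of 2 "3*a" a] by simp
        have h2: "3*e \<le> 6*(a*e)" using assms mult_right_mono[of 3 "6*a" e] by simp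
        have h3: "0 \<le> e*e" by simp
        have h4: "3*(a+e)^2 = 3*(a*a) + 6*(a*e) + 3*(e*e)" by (simp add: power2_eq_square algebra_simps)
        show ?thesis using h1 h2 h3 h4 by (smt (verit))
      qed
      finally show ?thesis .
    qed
    then show ?thesis using assms
      by (metis mult.assoc mult.left_commute mult_left_mono)
  qed
  then show ?thesis by (simp add: power2_eq_square algebra_simps)
qed

lemma split2:
  fixes a b e :: real
  assumes "a \<ge> 2/3" "a \<le> 1" "b \<ge> 2/3" "e \<ge> 0"
  shows "a^2*(b+2*e) \<le> (a+e)^2*(b+e)"
proof -
  have h1: "a*a \<le> 2*(a*b)" using assms mult_left_mono[of a "2*b" a] by simp
  have h2: "a*(a*e) \<le> 2*(a*(b*e))" using mult_right_mono[OF h1 assms(4)] by (simp add: algebra_simps)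
  have h3: "0 \<le> a*(e*e)" "0 \<le> e*(e*b)" "0 \<le> e*(e*e)" using assms by auto
  have h4: "(a+e)^2*(b+e) = a*(a*b) + a*(a*e) + 2*(a*(b*e)) + 2*(a*(e*e)) + e*(e*b) + e*(e*e)"
    by (simp add: power2_eq_square algebra_simps)
  have h5: "a^2*(b+2*e) = a*(a*b) + 2*(a*(a*e))" by (simp add: power2_eq_square algebra_simps)
  show ?thesis using h2 h3 h4 h5 by (smt (verit))
qed

lemma stepA:
  fixes a b e t :: real
  assumes "2/3 \<le> a" "2/3 \<le> b" "a+3*e \<le> 1" "b+3*e \<le> 1" "e \<ge> 0"
    "a^2*b \<le> t" "t \<le> (a+3*e)^2*(b+3*e)"
  shows "let a' = (if t \<le> (a+e)^2*(b+3*e) then a else a+2*e) in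
     2/3 \<le> a' \<and> a'+e \<le> 1 \<and> a'^2*b \<le> t \<and> t \<le> (a'+e)^2*(b+3*e)"
proof (cases "t \<le> (a+e)^2*(b+3*e)")
  case True
  then show ?thesis using assms by (simp add: Let_def)
next
  case False
  have "(a+2*e)^2*b \<le> (a+e)^2*(b+3*e)" using split1 assms by simp
  then show ?thesis using assms False by (simp add: Let_def algebra_simps)
qed

lemma stepB:
  fixes a b e t :: real
  assumes "2/3 \<le> a" "2/3 \<le> b" "a+e \<le> 1" "b+3*e \<le> 1" "e \<ge> 0"
    "a^2*b \<le> t" "t \<le> (a+e)^2*(b+3*e)"
  shows "let b' = (if t \<le> (a+e)^2*(b+e) then b else b+2*e) in
     2/3 \<le> b' \<and> b'+e \<le> 1 \<and> a^2*b' \<le> t \<and> t \<le> (a+e)^2*(b'+e)"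
proof (cases "t \<le> (a+e)^2*(b+e)")
  case True
  then show ?thesis using assms by (simp add: Let_def)
next
  case False
  have "a^2*(b+2*e) \<le> (a+e)^2*(b+e)" using split2 assms by simp
  then show ?thesis using assms False by (simp add: Let_def algebra_simps)
qed

lemma dd_Suc: "dd (Suc m) = dd m / 3" "dd m = 3*(dd m/3)" "dd m \<ge> 0"
  by (auto simp: dd_def)

lemma inv:
  assumes "8/27 \<le> t" "t \<le> 1"
  shows "2/3 \<le> fst (st t m) \<and> 2/3 \<le> snd (st t m) \<and> fst (st t m) + dd m \<le> 1 \<and>
    snd (st t m) + dd m \<le> 1 \<and> (fst (st t m))^2 * snd (st t m) \<le> t \<and>
    t \<le> (fst (st t m) + dd m)^2*(snd (st t m)+dd m)"
proof (induction m)
  case 0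
  then show ?case using assms by (simp add: dd_def power2_eq_square)
next
  case (Suc m)
  define a where "a = fst (st t m)"
  define b where "b = snd (st t m)"
  define e where "e = dd m / 3"
  have d: "dd m = 3*e" "e \<ge> 0" "dd (Suc m) = e" unfolding e_def dd_def by auto
  define a' where "a' = (if t \<le> (a+e)^2*(b+3*e) then a else a+2*e)"
  have A: "2/3 \<le> a' \<and> a'+e \<le> 1 \<and> a'^2*b \<le> t \<and> t \<le> (a'+e)^2*(b+3*e)"
    using stepA[of a b e t] Suc.IH d unfolding a_def b_def a'_def Let_def by simp
  define b' where "b' = (if t \<le> (a'+e)^2*(b+e) then b else b+2*e)"
  have B: "2/3 \<le> b' \<and> b'+e \<le> 1 \<and> a'^2*b' \<le> t \<and> t \<le> (a'+e)^2*(b'+e)"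
    using stepB[of a' b e t] A Suc.IH d unfolding b_def b'_def Let_def by simp
  have "st t (Suc m) = (a', b')"
    unfolding a'_def b'_def a_def b_def e_def by (simp add: Let_def d(1)[symmetric] e_def)
  then show ?case using A B d by simp
qed

lemma fst_sum: "fst (st t m) = (\<Sum>j<Suc m. real (alp t j) / 3^Suc j)"
proof (induction m)
  case 0
  then show ?case by (simp add: alp_def)
next
  case (Suc m)
  have "fst (st t (Suc m)) = fst (st t m) + real (alp t (Suc m)) / 3^Suc (Suc m)"
    by (simp add: Let_def alp_def dd_def power_divide)
  then show ?case using Suc.IH by simp
qed

lemma snd_sum: "snd (st t m) = (\<Sum>j<Suc m. real (bet t j) / 3^Suc j)"
proof (induction m)
  case 0
  then show ?case by (simp add: bet_def)
next
  case (Suc m)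
  have "snd (st t (Suc m)) = snd (st t m) + real (bet t (Suc m)) / 3^Suc (Suc m)"
    by (simp add: Let_def bet_def dd_def power_divide)
  then show ?case using Suc.IH by simp
qed

lemma digits_sum:
  fixes \<alpha> :: "nat \<Rightarrow> nat"
  assumes "\<forall>j. \<alpha> j \<in> {0,2}"
  defines "f \<equiv> (\<lambda>j. real (\<alpha> j) / 3^Suc j)"
  shows "summable f" "(\<Sum>j<n. f j) \<le> suminf f" "suminf f \<le> (\<Sum>j<n. f j) + (1/3)^n"
proof -
  have fb: "0 \<le> f j \<and> f j \<le> 2*(1/3)^Suc j" for j
    using assms(1)[rule_format, of j] by (auto simp: f_def power_divide)
  have sg: "summable (\<lambda>j. 2*(1/3::real)^Suc j)"
    by (intro summable_mult summable_Suc_iff[THEN iffD2]) simp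
  show sf: "summable f"
    by (rule summable_comparison_test'[OF sg]) (use fb in auto)
  have st: "summable (\<lambda>i. f (i+n))" using sf by (simp add: summable_iff_shift)
  have sp: "suminf f = (\<Sum>i. f (i+n)) + (\<Sum>i<n. f i)" using suminf_split_initial_segment[OF sf] .
  have "0 \<le> (\<Sum>i. f (i+n))" using st fb by (intro suminf_nonneg) auto
  then show "(\<Sum>j<n. f j) \<le> suminf f" using sp by simp
  have sg2: "summable (\<lambda>i. (2*(1/3)^Suc n) * (1/3::real)^i)" by (intro summable_mult) simp
  have "(\<Sum>i. f (i+n)) \<le> (\<Sum>i. (2*(1/3)^Suc n) * (1/3::real)^i)"
  proof (rule suminf_le[OF _ st sg2])
    fix i
    have "f (i+n) \<le> 2*(1/3)^Suc (i+n)" using fb by blast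
    also have "\<dots> = (2*(1/3)^Suc n) * (1/3::real)^i" by (simp add: power_add algebra_simps)
    finally show "f (i+n) \<le> (2*(1/3)^Suc n) * (1/3::real)^i" .
  qed
  also have "\<dots> = (2*(1/3)^Suc n) * (3/2)"
  proof -
    have "(\<Sum>i. (1/3::real)^i) = 3/2" by (subst suminf_geometric) auto
    moreover have "(\<Sum>i. (2*(1/3)^Suc n) * (1/3::real)^i) = (2*(1/3)^Suc n) * (\<Sum>i. (1/3::real)^i)"
      by (rule suminf_mult) simp
    ultimately show ?thesis by metis
  qed
  also have "\<dots> = (1/3)^n" by simp
  finally show "suminf f \<le> (\<Sum>j<n. f j) + (1/3)^n" using sp by simp
qed

lemma width:
  fixes a b d :: real
  assumes "0 \<le> a" "0 \<le> b" "0 \<le> d" "a + d \<le> 1" "b + d \<le> 1"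
  shows "(a+d)^2*(b+d) - a^2*b \<le> 4*d"
proof -
  have e: "(a+d)^2*(b+d) - a^2*b = (a+d)^2*d + (d*(2*a+d))*b"
    by (simp add: power2_eq_square algebra_simps)
  have "(a+d)^2 \<le> 1" using assms by (simp add: power_le_one)
  then have 1: "(a+d)^2*d \<le> d" using assms mult_right_mono[of "(a+d)^2" 1 d] by simp
  have "d*(2*a+d) \<le> d*3" using assms by (intro mult_left_mono) auto
  moreover have "(d*(2*a+d))*b \<le> d*(2*a+d)" using assms mult_left_mono[of b 1 "d*(2*a+d)"] by simp
  ultimately have 2: "(d*(2*a+d))*b \<le> 3*d" by simp
  show ?thesis using e 1 2 by simp
qed

lemma small_zero:
  fixes z :: real
  assumes "\<And>m. \<bar>z\<bar> \<le> 4*(1/3)^Suc m"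
  shows "z = 0"
proof (rule ccontr)
  assume "z \<noteq> 0"
  then have "\<bar>z\<bar>/4 > 0" by simp
  then obtain m where m: "(1/3::real)^m < \<bar>z\<bar>/4" using real_arch_pow_inv[of "\<bar>z\<bar>/4" "1/3"] by auto
  have "(1/3::real)^Suc m \<le> (1/3)^m" by (simp add: power_le_one)
  then show False using assms[of m] m by simp
qed

lemma digits02: "alp t j \<in> {0,2}" "bet t j \<in> {0,2}"
  by (auto simp: alp_def bet_def split: nat.splits)

theorem theorem3p5:
  shows "{x ^ 2 * y | x y. x \<in> cantor_tilde \<and> y \<in> cantor_tilde} = {8/27..(1::real)}"
proof
  show "{x ^ 2 * y | x y. x \<in> cantor_tilde \<and> y \<in> cantor_tilde} \<subseteq> {8/27..(1::real)}"
  proof clarify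
    fix x y :: real assume "x \<in> cantor_tilde" "y \<in> cantor_tilde"
    then have h: "2/3 \<le> x" "x \<le> 1" "2/3 \<le> y" "y \<le> 1" by (auto simp: cantor_tilde_def)
    have "(2/3)^2 \<le> x^2" using h by (intro power_mono) auto
    then have "(2/3)^2*(2/3) \<le> x^2*y" using h by (intro mult_mono) auto
    moreover have "x^2 \<le> 1" using h by (simp add: power_le_one)
    then have "x^2*y \<le> 1*1" using h by (intro mult_mono) auto
    ultimately show "x^2*y \<in> {8/27..1}" by (simp add: power2_eq_square)
  qed
next
  show "{8/27..(1::real)} \<subseteq> {x ^ 2 * y | x y. x \<in> cantor_tilde \<and> y \<in> cantor_tilde}"
  proof
    fix t :: real assume "t \<in> {8/27..1}"
    then have t: "8/27 \<le> t" "t \<le> 1" by auto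
    define x where "x = (\<Sum>j. real (alp t j) / 3^Suc j)"
    define y where "y = (\<Sum>j. real (bet t j) / 3^Suc j)"
    have xs: "x \<in> cantor_set" unfolding x_def cantor_set_def using digits02 by blast
    have ys: "y \<in> cantor_set" unfolding y_def cantor_set_def using digits02 by blast
    have bnd: "fst (st t m) \<le> x \<and> x \<le> fst (st t m) + dd m \<and> snd (st t m) \<le> y \<and> y \<le> snd (st t m) + dd m" for m
    proof -
      have d1: "\<forall>j. alp t j \<in> {0,2}" and d2: "\<forall>j. bet t j \<in> {0,2}" using digits02 by auto
      from digits_sum(2,3)[OF d1, where n="Suc m"] digits_sum(2,3)[OF d2, where n="Suc m"]
      show ?thesis unfolding x_def y_def fst_sum snd_sum dd_def by simp
    qed
    have I: "2/3 \<le> fst (st t m) \<and> 2/3 \<le> snd (st t m) \<and> fst (st t m) + dd m \<le> 1 \<and>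
      snd (st t m) + dd m \<le> 1 \<and> (fst (st t m))^2 * snd (st t m) \<le> t \<and>
      t \<le> (fst (st t m) + dd m)^2*(snd (st t m)+dd m)" for m using inv[OF t] .
    have xr: "2/3 \<le> x" "x \<le> 1" "2/3 \<le> y" "y \<le> 1" using bnd[of 0] I[of 0] by auto
    have "\<bar>x^2*y - t\<bar> \<le> 4*(1/3)^Suc m" for m
    proof -
      define a where "a = fst (st t m)"
      define b where "b = snd (st t m)"
      define d where "d = dd m"
      have h: "a \<le> x" "x \<le> a+d" "b \<le> y" "y \<le> b+d" "2/3 \<le> a" "2/3 \<le> b" "a+d \<le> 1" "b+d \<le> 1"
        "a^2*b \<le> t" "t \<le> (a+d)^2*(b+d)" "0 \<le> d"
        using bnd[of m] I[of m] unfolding a_def b_def d_def by (auto simp: dd_def)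
      have "a^2 \<le> x^2" using h by (intro power_mono) auto
      then have l: "a^2*b \<le> x^2*y" using h by (intro mult_mono) auto
      have "x^2 \<le> (a+d)^2" using h by (intro power_mono) auto
      then have u: "x^2*y \<le> (a+d)^2*(b+d)" using h by (intro mult_mono) auto
      have "(a+d)^2*(b+d) - a^2*b \<le> 4*d" using width[of a b d] h by simp
      moreover have "d = (1/3)^Suc m" unfolding d_def dd_def ..
      ultimately show ?thesis using l u h by (simp only: abs_le_iff) linarith
    qed
    then have "x^2*y - t = 0" by (rule small_zero)
    then show "t \<in> {x ^ 2 * y | x y. x \<in> cantor_tilde \<and> y \<in> cantor_tilde}"
      using xs ys xr unfolding cantor_tilde_def by force
  qed
qed

end
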